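(* Let $\mathcal{G}=(\mathcal{V},\mathcal{E},\mathbf{X})\sim \mathrm{CSBM}(n,p,q,\mathbb{P}_1,\mathbb{P}_{-1})$ with $p,q\in(0,1)$, where $\mathbb{P}_{1},\mathbb{P}_{-1}$ have densities (also denoted $\mathbb{P}_{1},\mathbb{P}_{-1}$). Fix a node $v$ with neighbor set $\mathcal{N}_v$. Consider the MAP estimator of $Y_v$ given $X_v$, $\{X_u\}_{u\in\mathcal{N}_v}$ and $\mathcal{N}_v$, $$f^*(X_v,\{X_u\}_{u\in\mathcal{N}_v})=\arg\max_{Y_v\in\{-1,1\}}\max_{Y_u\in\{-1,1\},\,\forall u\in\mathcal{N}_v}\pi_{Y_v,\{Y_u\}_{u\in\mathcal{N}_v}}\,\mathbb{P}\big(X_v,\{X_u\}_{u\in\mathcal{N}_v},\mathcal{N}_v\,\big|\,Y_v,\{Y_u\}_{u\in\mathcal{N}_v}\big),$$ where $\pi$ denotes the prior of the labels. Then the optimal (MAP) classifier is $f^*=\mathrm{sgn}(\mathcal{P}_v)$, where $$\mathcal{P}_v=\psi(X_v;\mathbb{P}_1,\mathbb{P}_{-1})+\sum_{u\in\mathcal{N}_v}\phi\big(\psi(X_u;\mathbb{P}_1,\mathbb{P}_{-1});\log(p/q)\big),$$ with $\psi(a;\mathbb{P}_1,\mathbb{P}_{-1})=\log\frac{\mathbb{P}_1(a)}{\mathbb{P}_{-1}(a)}$ and $\phi(a;b)=\mathrm{ReLU}(a+b)-\mathrm{ReLU}(a-b)-b$.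
   Context: $\mathrm{CSBM}(n,p,q,\mathbb{P}_1,\mathbb{P}_{-1})$ (contextual stochastic block model): there are $n$ nodes $\mathcal{V}=[n]$; each node $v$ independently gets a label $Y_v\in\{-1,1\}$ uniformly at random (Rademacher); given $Y_v$, the attribute $X_v$ is drawn from $\mathbb{P}_{Y_v}$; for two nodes $u,v$, an edge is present with probability $p$ if $Y_u=Y_v$ and with probability $q$ if $Y_u\neq Y_v$; all attributes and edges are mutually independent given the labels $\mathbf{Y}$. $\mathrm{ReLU}(x)=\max\{x,0\}$. *)

theory Defs
  imports Complex_Main "HOL-Library.FuncSet"
begin

definition ReLU :: "real \<Rightarrow> real" where
  "ReLU x = max x 0"

definition psi :: "('a \<Rightarrow> real) \<Rightarrow> ('a \<Rightarrow> real) \<Rightarrow> 'a \<Rightarrow> real" where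
  "psi P1 Pm1 a = ln (P1 a / Pm1 a)"

definition phi :: "real \<Rightarrow> real \<Rightarrow> real" where
  "phi a b = ReLU (a + b) - ReLU (a - b) - b"

definition label_density :: "('a \<Rightarrow> real) \<Rightarrow> ('a \<Rightarrow> real) \<Rightarrow> int \<Rightarrow> 'a \<Rightarrow> real" where
  "label_density P1 Pm1 y a = (if y = 1 then P1 a else Pm1 a)"

definition edge_prob :: "real \<Rightarrow> real \<Rightarrow> int \<Rightarrow> int \<Rightarrow> real" where
  "edge_prob p q a b = (if a = b then p else q)"

text \<open>P(N_v = N | Y_v = yv, Y_u = yN u for u in N): the labels of the remaining nodes
  W = V - N - {v} are not conditioned on and are marginalised out (uniform prior,
  independent edges).\<close>
definition nbhd_prob :: "nat \<Rightarrow> real \<Rightarrow> real \<Rightarrow> nat \<Rightarrow> nat set \<Rightarrow> int \<Rightarrow> (nat \<Rightarrow> int) \<Rightarrow> real" where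
  "nbhd_prob n p q v N yv yN =
     (let W = {..<n} - N - {v} in
      (\<Prod>u\<in>N. edge_prob p q yv (yN u)) *
      (\<Sum>z\<in>W \<rightarrow>\<^sub>E {-1, 1}. (1/2) ^ card W * (\<Prod>w\<in>W. 1 - edge_prob p q yv (z w))))"

definition csbm_likelihood ::
  "nat \<Rightarrow> real \<Rightarrow> real \<Rightarrow> ('a \<Rightarrow> real) \<Rightarrow> ('a \<Rightarrow> real) \<Rightarrow> nat \<Rightarrow> nat set \<Rightarrow> (nat \<Rightarrow> 'a)
     \<Rightarrow> int \<Rightarrow> (nat \<Rightarrow> int) \<Rightarrow> real" where
  "csbm_likelihood n p q P1 Pm1 v N x yv yN =
     label_density P1 Pm1 yv (x v) * (\<Prod>u\<in>N. label_density P1 Pm1 (yN u) (x u))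
     * nbhd_prob n p q v N yv yN"

definition label_prior :: "nat set \<Rightarrow> real" where
  "label_prior N = (1/2) ^ (card N + 1)"

definition map_objective ::
  "nat \<Rightarrow> real \<Rightarrow> real \<Rightarrow> ('a \<Rightarrow> real) \<Rightarrow> ('a \<Rightarrow> real) \<Rightarrow> nat \<Rightarrow> nat set \<Rightarrow> (nat \<Rightarrow> 'a)
     \<Rightarrow> int \<Rightarrow> real" where
  "map_objective n p q P1 Pm1 v N x yv =
     Max ((\<lambda>yN. label_prior N * csbm_likelihood n p q P1 Pm1 v N x yv yN) ` (N \<rightarrow>\<^sub>E {-1, 1}))"

definition map_set ::
  "nat \<Rightarrow> real \<Rightarrow> real \<Rightarrow> ('a \<Rightarrow> real) \<Rightarrow> ('a \<Rightarrow> real) \<Rightarrow> nat \<Rightarrow> nat set \<Rightarrow> (nat \<Rightarrow> 'a) \<Rightarrow> int set" where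
  "map_set n p q P1 Pm1 v N x =
     {y \<in> {-1, 1}. \<forall>y'\<in>{-1, 1}. map_objective n p q P1 Pm1 v N x y' \<le> map_objective n p q P1 Pm1 v N x y}"

definition P_stat ::
  "real \<Rightarrow> real \<Rightarrow> ('a \<Rightarrow> real) \<Rightarrow> ('a \<Rightarrow> real) \<Rightarrow> nat \<Rightarrow> nat set \<Rightarrow> (nat \<Rightarrow> 'a) \<Rightarrow> real" where
  "P_stat p q P1 Pm1 v N x =
     psi P1 Pm1 (x v) + (\<Sum>u\<in>N. phi (psi P1 Pm1 (x u)) (ln (p / q)))"

end

theory Submission
  imports Defs
begin

lemma max_prod_PiE:
  fixes g :: "nat \<Rightarrow> int \<Rightarrow> real"
  assumes fin: "finite N" and pos: "\<And>u y. u \<in> N \<Longrightarrow> g u y > 0" and c: "c \<ge> 0"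
  shows "Max ((\<lambda>yN. c * (\<Prod>u\<in>N. g u (yN u))) ` (N \<rightarrow>\<^sub>E {-1,1::int}))
       = c * (\<Prod>u\<in>N. max (g u (-1)) (g u 1))"
proof (rule Max_eqI)
  show "finite ((\<lambda>yN. c * (\<Prod>u\<in>N. g u (yN u))) ` (N \<rightarrow>\<^sub>E {-1,1::int}))"
    using fin by (simp add: finite_PiE)
next
  fix y assume "y \<in> (\<lambda>yN. c * (\<Prod>u\<in>N. g u (yN u))) ` (N \<rightarrow>\<^sub>E {-1,1::int})"
  then obtain yN where yN: "yN \<in> N \<rightarrow>\<^sub>E {-1,1}" and y: "y = c * (\<Prod>u\<in>N. g u (yN u))" by blast
  have "(\<Prod>u\<in>N. g u (yN u)) \<le> (\<Prod>u\<in>N. max (g u (-1)) (g u 1))"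
  proof (rule prod_mono)
    fix u assume u: "u \<in> N"
    then have "yN u \<in> {-1,1}" using yN by (auto simp: PiE_def)
    then show "0 \<le> g u (yN u) \<and> g u (yN u) \<le> max (g u (-1)) (g u 1)"
      using pos[OF u] by (auto simp: less_imp_le)
  qed
  then show "y \<le> c * (\<Prod>u\<in>N. max (g u (-1)) (g u 1))"
    using y c by (simp add: mult_left_mono)
next
  define w :: "nat \<Rightarrow> int" where "w = (\<lambda>u. if u \<in> N then (if g u (-1) \<le> g u 1 then 1 else -1) else undefined)"
  have wP: "w \<in> N \<rightarrow>\<^sub>E {-1,1}" by (auto simp: w_def PiE_def extensional_def)
  have "(\<Prod>u\<in>N. g u (w u)) = (\<Prod>u\<in>N. max (g u (-1)) (g u 1))"
    by (rule prod.cong) (auto simp: w_def max_def)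
  then show "c * (\<Prod>u\<in>N. max (g u (-1)) (g u 1))
     \<in> (\<lambda>yN. c * (\<Prod>u\<in>N. g u (yN u))) ` (N \<rightarrow>\<^sub>E {-1,1::int})"
    using wP by (metis (no_types, lifting) image_eqI)
qed

lemma ln_max: "(a::real) > 0 \<Longrightarrow> b > 0 \<Longrightarrow> ln (max a b) = max (ln a) (ln b)"
proof (cases "a \<le> b")
  case True
  assume "a > 0" "b > 0"
  with True have "ln a \<le> ln b" by (simp add: ln_le_cancel_iff)
  with True show ?thesis by (simp add: max_def)
next
  case False
  assume "a > 0" "b > 0"
  with False have "\<not> ln a \<le> ln b" by (simp add: ln_le_cancel_iff)
  with False show ?thesis by (simp add: max_def)
qed

theorem proposition1:
  fixes n :: nat and p q :: real and P1 Pm1 :: "'a \<Rightarrow> real"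
    and v :: nat and N :: "nat set" and x :: "nat \<Rightarrow> 'a"
  assumes "0 < p" "p < 1" "0 < q" "q < 1"
    and "v < n" and "N \<subseteq> {..<n} - {v}"
    and "\<And>u. u \<in> insert v N \<Longrightarrow> P1 (x u) > 0"
    and "\<And>u. u \<in> insert v N \<Longrightarrow> Pm1 (x u) > 0"
  shows "(P_stat p q P1 Pm1 v N x > 0 \<longrightarrow> map_set n p q P1 Pm1 v N x = {1})
       \<and> (P_stat p q P1 Pm1 v N x < 0 \<longrightarrow> map_set n p q P1 Pm1 v N x = {-1})
       \<and> (P_stat p q P1 Pm1 v N x = 0 \<longrightarrow> map_set n p q P1 Pm1 v N x = {-1, 1})"
proof -
  note p0 = assms(1) and p1 = assms(2) and q0 = assms(3) and q1 = assms(4)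
  have finN: "finite N" using assms(6) finite_subset by blast
  define W where "W = {..<n} - N - {v}"
  have finW: "finite W" by (simp add: W_def)
  define C where "C = (1/2::real) ^ card W * (2 - p - q) ^ card W"
  have Cpos: "C > 0" using p1 q1 by (simp add: C_def)
  have S: "(\<Sum>z\<in>W \<rightarrow>\<^sub>E {-1, 1}. (1/2) ^ card W * (\<Prod>w\<in>W. 1 - edge_prob p q yv (z w))) = C"
    if yv: "yv \<in> {-1,1::int}" for yv
  proof -
    have "(\<Sum>z\<in>W \<rightarrow>\<^sub>E {-1, 1}. (1/2) ^ card W * (\<Prod>w\<in>W. 1 - edge_prob p q yv (z w)))
       = (1/2) ^ card W * (\<Sum>z\<in>W \<rightarrow>\<^sub>E {-1, 1::int}. (\<Prod>w\<in>W. 1 - edge_prob p q yv (z w)))"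
      by (simp add: sum_distrib_left)
    also have "(\<Sum>z\<in>W \<rightarrow>\<^sub>E {-1, 1::int}. (\<Prod>w\<in>W. 1 - edge_prob p q yv (z w)))
        = (\<Prod>w\<in>W. \<Sum>y\<in>{-1,1::int}. 1 - edge_prob p q yv y)"
      by (rule prod_sum_PiE[symmetric]) (auto simp: finW)
    also have "\<dots> = (2 - p - q) ^ card W"
      using yv by (auto simp: edge_prob_def algebra_simps)
    finally show ?thesis by (simp add: C_def)
  qed
  define g where "g = (\<lambda>yv u y. label_density P1 Pm1 y (x u) * edge_prob p q yv y)"
  have gpos: "g yv u y > 0" if "u \<in> N" for yv u y
    using that assms(7,8) p0 q0 by (auto simp: g_def label_density_def edge_prob_def)
  define A where "A = (\<lambda>yv. label_density P1 Pm1 yv (x v) * (\<Prod>u\<in>N. max (g yv u (-1)) (g yv u 1)))"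
  have obj: "map_objective n p q P1 Pm1 v N x yv = label_prior N * C * A yv"
    if yv: "yv \<in> {-1,1::int}" for yv
  proof -
    have "(\<lambda>yN. label_prior N * csbm_likelihood n p q P1 Pm1 v N x yv yN)
        = (\<lambda>yN. (label_prior N * C * label_density P1 Pm1 yv (x v)) * (\<Prod>u\<in>N. g yv u (yN u)))"
      by (rule ext) (simp add: csbm_likelihood_def nbhd_prob_def Let_def W_def[symmetric] S[OF yv]
          g_def prod.distrib mult_ac)
    then have "map_objective n p q P1 Pm1 v N x yv
       = Max ((\<lambda>yN. (label_prior N * C * label_density P1 Pm1 yv (x v)) * (\<Prod>u\<in>N. g yv u (yN u))) ` (N \<rightarrow>\<^sub>E {-1,1}))"
      unfolding map_objective_def by (simp only:)
    also have "\<dots> = (label_prior N * C * label_density P1 Pm1 yv (x v)) * (\<Prod>u\<in>N. max (g yv u (-1)) (g yv u 1))"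
      by (rule max_prod_PiE[OF finN gpos]) (use Cpos assms(7,8) in \<open>auto simp: label_prior_def label_density_def less_imp_le\<close>)
    finally show ?thesis by (simp add: A_def mult_ac)
  qed
  have Apos: "A yv > 0" for yv
    using assms(7,8) gpos by (auto simp: A_def label_density_def less_max_iff_disj intro!: prod_pos mult_pos_pos)
  have key: "ln (A 1) - ln (A (-1)) = P_stat p q P1 Pm1 v N x"
  proof -
    have "ln (A yv) = ln (label_density P1 Pm1 yv (x v)) + (\<Sum>u\<in>N. ln (max (g yv u (-1)) (g yv u 1)))" for yv
    proof -
      have mp: "\<And>u. u \<in> N \<Longrightarrow> max (g yv u (-1)) (g yv u 1) > 0"
        using gpos by (simp add: less_max_iff_disj)
      have "ln (\<Prod>u\<in>N. max (g yv u (-1)) (g yv u 1)) = (\<Sum>u\<in>N. ln (max (g yv u (-1)) (g yv u 1)))"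
        using mp finN by (intro ln_prod) (auto simp: less_imp_neq[symmetric])
      moreover have "(\<Prod>u\<in>N. max (g yv u (-1)) (g yv u 1)) > 0"
        using mp by (simp add: prod_pos)
      moreover have "label_density P1 Pm1 yv (x v) > 0"
        using assms(7,8) by (simp add: label_density_def)
      ultimately show ?thesis by (simp add: A_def ln_mult)
    qed
    then have "ln (A 1) - ln (A (-1)) = ln (P1 (x v)) - ln (Pm1 (x v))
       + (\<Sum>u\<in>N. ln (max (g 1 u (-1)) (g 1 u 1)) - ln (max (g (-1) u (-1)) (g (-1) u 1)))"
      by (simp add: label_density_def sum_subtractf)
    also have "\<dots> = P_stat p q P1 Pm1 v N x"
      unfolding P_stat_def
    proof (rule arg_cong2[where f="(+)"])
      show "ln (P1 (x v)) - ln (Pm1 (x v)) = psi P1 Pm1 (x v)"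
      proof -
        have "P1 (x v) > 0" "Pm1 (x v) > 0" using assms(7,8) by auto
        then show ?thesis by (simp add: psi_def ln_div)
      qed
    next
      show "(\<Sum>u\<in>N. ln (max (g 1 u (-1)) (g 1 u 1)) - ln (max (g (-1) u (-1)) (g (-1) u 1)))
          = (\<Sum>u\<in>N. phi (psi P1 Pm1 (x u)) (ln (p / q)))"
      proof (rule sum.cong)
        fix u assume u: "u \<in> N"
        have a: "P1 (x u) > 0" "Pm1 (x u) > 0" using u assms(7,8) by auto
        show "ln (max (g 1 u (-1)) (g 1 u 1)) - ln (max (g (-1) u (-1)) (g (-1) u 1))
          = phi (psi P1 Pm1 (x u)) (ln (p / q))"
          using a p0 q0
          by (simp add: ln_max g_def label_density_def edge_prob_def ln_mult psi_def ln_div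
              phi_def ReLU_def)
      qed simp
    qed
    finally show ?thesis .
  qed
  have Kpos: "label_prior N * C > 0" using Cpos by (simp add: label_prior_def)
  have cmp: "(A (-1) < A 1) = (P_stat p q P1 Pm1 v N x > 0)" "(A 1 < A (-1)) = (P_stat p q P1 Pm1 v N x < 0)"
    "(A 1 = A (-1)) = (P_stat p q P1 Pm1 v N x = 0)"
    using key Apos by (auto simp flip: key)
  have ms: "map_set n p q P1 Pm1 v N x =
      {y \<in> {-1, 1}. \<forall>y'\<in>{-1, 1}. A y' \<le> A y}"
    using obj Kpos by (auto simp: map_set_def mult_le_cancel_left_pos)
  show ?thesis unfolding ms cmp[symmetric] by auto
qed

end
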